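(* For any nonempty rooted trees $a$ and $b$, $\omega(a\bowtie b)=0$.
   Context: Let $k$ be a field of characteristic $0$. $\mathcal H_{CK}$ is the Connes–Kreimer Hopf algebra of rooted forests (free commutative algebra on nonempty non-planar rooted trees, unit the empty forest, counit $\varepsilon$, coproduct by admissible cuts $\Delta_{CK}(u)=\sum v\otimes w$ over decompositions of the vertex set of $u$ into $V\sqcup W$ with no vertex of $V$ strictly below a vertex of $W$, $v,w$ the induced forests), with convolution $*$. $\delta$ is the character of $\mathcal H_{CK}$ with $\delta(\bullet)=1$ ($\bullet$ the one-vertex tree) and $\delta(t)=0$ for trees with at least two vertices, and $\omega=\log^*\delta=\sum_{n\ge1}\frac{(-1)^{n+1}}{n}(\delta-\varepsilon)^{*n}$. For trees $a=B_+(a_1\cdots a_n)$, $b=B_+(b_1\cdots b_p)$ (where $B_+$ grafts a forest onto a new root): $a\circ b=B_+(a_1\cdots a_nb)$, $a\times b=B_+(a_1\cdots a_nb_1\cdots b_p)$, and $a\bowtie b=a\circ b+b\circ a+a\times b$. *)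

theory Defs
  imports Main "HOL-Library.Multiset"
begin

text \<open>Non-planar rooted trees: a tree is B+ of a (multi)set of trees (its children).
  Every tree is nonempty (has a root). Forests are multisets of trees; the empty
  forest is the unit of the Connes-Kreimer Hopf algebra. Forests form a basis of
  H_CK, so linear functionals on H_CK are functions on forests.\<close>

datatype tree = Node "tree multiset"

type_synonym forest = "tree multiset"

abbreviation Bplus :: "forest \<Rightarrow> tree" where "Bplus \<equiv> Node"

abbreviation single_vertex :: tree where "single_vertex \<equiv> Node {#}"

text \<open>Combining admissible cuts of the components of a forest: the cuts of a product
  of forests are pairs (v1 v2, w1 w2).\<close>

definition cut_prod ::
  "(forest \<times> forest) multiset \<Rightarrow> (forest \<times> forest) multiset \<Rightarrow> (forest \<times> forest) multiset" where
  "cut_prod S T = (\<Sum>(v1, w1) \<in># S. \<Sum>(v2, w2) \<in># T. {#(v1 + v2, w1 + w2)#})"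

definition cuts_prod :: "(forest \<times> forest) multiset multiset \<Rightarrow> (forest \<times> forest) multiset" where
  "cuts_prod M = fold_mset cut_prod {#({#}, {#})#} M"

text \<open>Admissible cuts of a tree, as a multiset of pairs (V-part, W-part), one entry per
  decomposition of the vertex set into V and W with no vertex of V strictly below
  (i.e. an ancestor of) a vertex of W. Either the root is in V (then all vertices are
  in V), or the root is in W and the children forest is cut.\<close>

primrec cutsT :: "tree \<Rightarrow> (forest \<times> forest) multiset" where
  "cutsT (Node F) =
     add_mset ({#Node F#}, {#})
       (image_mset (\<lambda>(v, w). (v, {#Node w#})) (cuts_prod (image_mset cutsT F)))"

definition cutsF :: "forest \<Rightarrow> (forest \<times> forest) multiset" where
  "cutsF F = cuts_prod (image_mset cutsT F)"

text \<open>Convolution of linear functionals via the coproduct Delta_CK.\<close>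

definition conv :: "(forest \<Rightarrow> 'k::field) \<Rightarrow> (forest \<Rightarrow> 'k) \<Rightarrow> forest \<Rightarrow> 'k" where
  "conv f g F = (\<Sum>(v, w) \<in># cutsF F. f v * g w)"

definition counit :: "forest \<Rightarrow> 'k::field" where
  "counit F = (if F = {#} then 1 else 0)"

fun convpow :: "(forest \<Rightarrow> 'k::field) \<Rightarrow> nat \<Rightarrow> forest \<Rightarrow> 'k" where
  "convpow f 0 = counit"
| "convpow f (Suc n) = conv f (convpow f n)"

definition delta_char :: "forest \<Rightarrow> 'k::field" where
  "delta_char F = (\<Prod>t \<in># F. if t = single_vertex then 1 else 0)"

text \<open>omega = log^* delta = sum_{n>=1} (-1)^(n+1)/n (delta - epsilon)^{*n}. On each forest
  only finitely many terms are nonzero, so the series is the (finite) sum over its support.\<close>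

definition omega :: "forest \<Rightarrow> 'k::field_char_0" where
  "omega F = (\<Sum>n \<in> {n. n \<ge> 1 \<and> convpow (\<lambda>G. delta_char G - counit G) n F \<noteq> (0::'k)}.
                 (-1) ^ (n + 1) / of_nat n * convpow (\<lambda>G. delta_char G - counit G) n F)"

fun graft :: "tree \<Rightarrow> tree \<Rightarrow> tree" where
  "graft (Node A) b = Node (add_mset b A)"

fun merge :: "tree \<Rightarrow> tree \<Rightarrow> tree" where
  "merge (Node A) (Node B) = Node (A + B)"

text \<open>a \<bowtie> b = a\<circ>b + b\<circ>a + a\<times>b as an element of H_CK: a formal sum of three one-tree
  forests; a linear functional is evaluated on it by linearity.\<close>

definition bowtie :: "tree \<Rightarrow> tree \<Rightarrow> forest multiset" where
  "bowtie a b = {# {#graft a b#}, {#graft b a#}, {#merge a b#} #}"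

definition lin_eval :: "(forest \<Rightarrow> 'k::field) \<Rightarrow> forest multiset \<Rightarrow> 'k" where
  "lin_eval f X = (\<Sum>F \<in># X. f F)"

end

theory Submission imports Defs "HOL-Computational_Algebra.Polynomial" begin

definition pl :: "forest \<times> forest \<Rightarrow> forest \<times> forest \<Rightarrow> forest \<times> forest" where
  "pl p q = (fst p + fst q, snd p + snd q)"

lemma sum_single_image: "(\<Sum>q\<in>#T. {#f q#}) = image_mset f T"
  by (induction T) auto

lemma cut_prod_alt: "cut_prod S T = (\<Sum>p\<in>#S. image_mset (pl p) T)"
  unfolding cut_prod_def pl_def
  by (rule arg_cong[where f=sum_mset], rule image_mset_cong) (auto simp: split_def sum_single_image)

lemma sum_mset_image_Sum:
  "(\<Sum>p\<in>#(\<Sum>x\<in>#M. f x). \<phi> p) = (\<Sum>x\<in>#M. \<Sum>p\<in>#f x. \<phi> p)"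
  by (induction M) auto

lemma sum_mset_single_id: "(\<Sum>x\<in>#M. {#x#}) = M"
  by (induction M) auto

lemma sum_cut_prod:
  "(\<Sum>p\<in>#cut_prod S T. \<phi> p) = (\<Sum>p\<in>#S. \<Sum>q\<in>#T. \<phi> (pl p q))"
  unfolding cut_prod_alt by (simp add: sum_mset_image_Sum multiset.map_comp comp_def)

lemma pl_assoc: "pl p (pl q r) = pl (pl p q) r" and pl_comm: "pl p q = pl q p"
  and pl_lcomm: "pl p (pl q r) = pl q (pl p r)"
  by (auto simp: pl_def ac_simps)

lemma cut_prod_lcomm: "cut_prod x (cut_prod y z) = cut_prod y (cut_prod x z)"
proof -
  have e: "cut_prod x (cut_prod y z) = (\<Sum>p\<in>#x. \<Sum>q\<in>#y. \<Sum>r\<in>#z. {#pl p (pl q r)#})"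
    for x y z
  proof -
    have "cut_prod x (cut_prod y z) = (\<Sum>p\<in>#cut_prod x (cut_prod y z). {#p#})"
      by (simp only: sum_mset_single_id)
    also have "\<dots> = (\<Sum>p\<in>#x. \<Sum>q\<in>#y. \<Sum>r\<in>#z. {#pl p (pl q r)#})"
      by (simp only: sum_cut_prod)
    finally show ?thesis .
  qed
  have "(\<Sum>p\<in>#x. \<Sum>q\<in>#y. \<Sum>r\<in>#z. {#pl p (pl q r)#}) = (\<Sum>q\<in>#y. \<Sum>p\<in>#x. \<Sum>r\<in>#z. {#pl q (pl p r)#})"
    by (subst sum_mset.swap) (simp only: pl_lcomm)
  then show ?thesis by (simp only: e)
qed

interpretation cp: comp_fun_commute cut_prod
  by unfold_locales (auto simp: fun_eq_iff cut_prod_lcomm)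

lemma cut_prod_unit: "cut_prod S {#({#},{#})#} = S"
  unfolding cut_prod_alt by (simp add: pl_def sum_mset_single_id)

lemma cutsF_empty: "cutsF {#} = {#({#},{#})#}"
  by (simp add: cutsF_def cuts_prod_def)

lemma cutsF_add: "cutsF (add_mset t F) = cut_prod (cutsT t) (cutsF F)"
  by (simp add: cutsF_def cuts_prod_def)

lemma cutsF_single: "cutsF {#t#} = cutsT t"
  by (simp add: cutsF_add cutsF_empty cut_prod_unit)

lemma cutsT_Node: "cutsT (Node F) = add_mset ({#Node F#}, {#}) (image_mset (\<lambda>(v, w). (v, {#Node w#})) (cutsF F))"
  by (simp add: cutsF_def)

lemma cut_prod_assoc: "cut_prod x (cut_prod y z) = cut_prod (cut_prod x y) z"
proof -
  have "cut_prod x (cut_prod y z) = (\<Sum>p\<in>#cut_prod x (cut_prod y z). {#p#})"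
    by (simp only: sum_mset_single_id)
  also have "\<dots> = (\<Sum>p\<in>#x. \<Sum>q\<in>#y. \<Sum>r\<in>#z. {#pl p (pl q r)#})"
    by (simp only: sum_cut_prod)
  also have "\<dots> = (\<Sum>p\<in>#x. \<Sum>q\<in>#y. \<Sum>r\<in>#z. {#pl (pl p q) r#})"
    by (simp only: pl_assoc)
  also have "\<dots> = (\<Sum>p\<in>#cut_prod (cut_prod x y) z. {#p#})"
    by (simp only: sum_cut_prod)
  finally show ?thesis by (simp only: sum_mset_single_id)
qed

lemma cutsF_union: "cutsF (F + G) = cut_prod (cutsF F) (cutsF G)"
proof (induction F)
  case empty
  have "cut_prod {#({#},{#})#} S = S" for S
  proof -
    have "pl ({#},{#}) = id" by (auto simp: pl_def fun_eq_iff)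
    then show ?thesis unfolding cut_prod_alt by simp
  qed
  then show ?case by (simp add: cutsF_empty)
next
  case (add t F)
  then show ?case by (simp add: cutsF_add cut_prod_assoc)
qed

lemma counit_add: "(counit (A + B) :: 'k::field) = counit A * counit B"
  by (simp add: counit_def)

lemma delta_add: "(delta_char (A + B) :: 'k::field) = delta_char A * delta_char B"
  by (simp add: delta_char_def)

lemma sum_mset_sum_swap: "(\<Sum>x\<in>#M. \<Sum>k\<in>K. f x k) = (\<Sum>k\<in>K. \<Sum>x\<in>#M. f x k)"
  by (induction M) (auto simp: sum.distrib)

lemma sum_mset_cmult: "(\<Sum>x\<in>#M. c * f x) = (c::'a::comm_semiring_0) * (\<Sum>x\<in>#M. f x)"
  by (induction M) (auto simp: algebra_simps)

lemma in_Sum_mset: "x \<in># (\<Sum>y\<in>#M. f y) \<longleftrightarrow> (\<exists>y\<in>#M. x \<in># f y)"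
  by (induction M) auto

lemma in_cut_prod: "x \<in># cut_prod S T \<Longrightarrow> \<exists>p\<in>#S. \<exists>q\<in>#T. x = pl p q"
  unfolding cut_prod_alt in_Sum_mset by auto

lemma counit_left_tree:
  "\<And>h. (\<Sum>p\<in>#cutsT t. counit (fst p) * h (snd p)) = (h {#t#} :: 'k::field)"
proof (induction t)
  case (Node F)
  have forest: "\<And>h. (\<Sum>p\<in>#cutsF G. counit (fst p) * h (snd p)) = (h G :: 'k)"
    if "G \<subseteq># F" for G
    using that
  proof (induction G)
    case empty
    then show ?case by (simp add: cutsF_empty counit_def)
  next
    case (add t G)
    have tF: "t \<in># F" using add.prems by (meson mset_subset_eq_insertD)
    have GF: "G \<subseteq># F" by (rule subset_mset.order_trans[OF _ add.prems]) simp
    have "(\<Sum>p\<in>#cutsF (add_mset t G). counit (fst p) * h (snd p)) = h (add_mset t G)" for h :: "forest \<Rightarrow> 'k"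
    proof -
    have "(\<Sum>p\<in>#cutsF (add_mset t G). counit (fst p) * h (snd p))
        = (\<Sum>p\<in>#cutsT t. \<Sum>q\<in>#cutsF G. counit (fst (pl p q)) * h (snd (pl p q)))"
      by (simp only: cutsF_add sum_cut_prod)
    also have "\<dots> = (\<Sum>p\<in>#cutsT t. counit (fst p) * (\<Sum>q\<in>#cutsF G. counit (fst q) * h (snd p + snd q)))"
      by (simp add: pl_def counit_add sum_mset_cmult[symmetric] mult.assoc)
    also have "\<dots> = (\<Sum>p\<in>#cutsT t. counit (fst p) * h (snd p + G))"
      apply (intro arg_cong[where f=sum_mset] image_mset_cong)
      subgoal for p using add.IH[OF GF, of "\<lambda>w. h (snd p + w)"] by simp
      done
    also have "\<dots> = h ({#t#} + G)"
      using Node.IH[OF tF, of "\<lambda>w. h (w + G)"] by simp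
    finally show ?thesis by simp
    qed
    then show ?case by blast
  qed
  fix h :: "forest \<Rightarrow> 'k"
  have "(\<Sum>p\<in>#cutsT (Node F). counit (fst p) * h (snd p))
      = counit {#Node F#} * h {#} + (\<Sum>p\<in>#cutsF F. counit (fst p) * h {#Node (snd p)#})"
    by (simp add: cutsF_def comp_def split_def multiset.map_comp)
  also have "\<dots> = h {#Node F#}"
    using forest[of F "\<lambda>w. h {#Node w#}"] by (simp add: counit_def)
  finally show "(\<Sum>p\<in>#cutsT (Node F). counit (fst p) * h (snd p)) = h {#Node F#}" .
qed

lemma counit_left_forest:
  "(\<Sum>p\<in>#cutsF F. counit (fst p) * h (snd p)) = (h F :: 'k::field)"
proof (induction F arbitrary: h)
  case empty
  then show ?case by (simp add: cutsF_empty counit_def)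
next
  case (add t G)
  have "(\<Sum>p\<in>#cutsF (add_mset t G). counit (fst p) * h (snd p))
      = (\<Sum>p\<in>#cutsT t. \<Sum>q\<in>#cutsF G. counit (fst (pl p q)) * h (snd (pl p q)))"
    by (simp only: cutsF_add sum_cut_prod)
  also have "\<dots> = (\<Sum>p\<in>#cutsT t. counit (fst p) * (\<Sum>q\<in>#cutsF G. counit (fst q) * h (snd p + snd q)))"
    by (simp add: pl_def counit_add sum_mset_cmult[symmetric] mult.assoc)
  also have "\<dots> = (\<Sum>p\<in>#cutsT t. counit (fst p) * h (snd p + G))"
    apply (intro arg_cong[where f=sum_mset] image_mset_cong)
    subgoal for p using add.IH[of "\<lambda>w. h (snd p + w)"] by simp
    done
  also have "\<dots> = h ({#t#} + G)"
    using counit_left_tree[where t=t and h="\<lambda>w. h (w + G)"] by simp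
  finally show ?case by simp
qed

lemma conv_split: "conv f h F = (\<Sum>p\<in>#cutsF F. f (fst p) * h (snd p))"
  unfolding conv_def by (simp add: split_def)

lemma conv_counit: "conv counit h F = h F"
  by (simp add: conv_split counit_left_forest)

abbreviation gch :: "forest \<Rightarrow> 'k::field" where
  "gch \<equiv> (\<lambda>G. delta_char G - counit G)"

lemma conv_empty: "conv f h {#} = f {#} * h {#}"
  by (simp add: conv_split cutsF_empty)

lemma P_empty: "convpow (delta_char :: forest \<Rightarrow> 'k::field) n {#} = 1"
  by (induction n) (auto simp: conv_empty counit_def delta_char_def)

lemma P_union: "convpow (delta_char :: forest \<Rightarrow> 'k::field) n (F + G)
   = convpow delta_char n F * convpow delta_char n G"
proof (induction n arbitrary: F G)
  case 0
  then show ?case by (simp add: counit_add)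
next
  case (Suc n)
  have "convpow (delta_char :: forest \<Rightarrow> 'k) (Suc n) (F + G)
    = (\<Sum>p\<in>#cutsF F. \<Sum>q\<in>#cutsF G. delta_char (fst (pl p q)) * convpow delta_char n (snd (pl p q)))"
    by (simp only: convpow.simps conv_split cutsF_union sum_cut_prod)
  also have "\<dots> = (\<Sum>p\<in>#cutsF F. \<Sum>q\<in>#cutsF G. (delta_char (fst p) * convpow delta_char n (snd p))
       * (delta_char (fst q) * convpow delta_char n (snd q)))"
    by (simp add: pl_def delta_add Suc.IH ac_simps)
  also have "\<dots> = (\<Sum>p\<in>#cutsF F. delta_char (fst p) * convpow delta_char n (snd p))
       * (\<Sum>q\<in>#cutsF G. delta_char (fst q) * convpow (delta_char :: forest \<Rightarrow> 'k) n (snd q))"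
    by (simp only: sum_mset_distrib_right, simp only: sum_mset_distrib_left)
  also have "\<dots> = convpow (delta_char :: forest \<Rightarrow> 'k) (Suc n) F * convpow delta_char (Suc n) G"
    by (simp only: convpow.simps conv_split)
  finally show ?case .
qed

lemma sum_mset_sum_cmult: "(\<Sum>x\<in>#M. (c x :: 'a::comm_semiring_0) * (\<Sum>k\<in>K. f x k)) = (\<Sum>k\<in>K. \<Sum>x\<in>#M. c x * f x k)"
  by (induction M) (auto simp: sum_distrib_left sum.distrib)

lemma delta_single_Node: "delta_char {#Node F#} = counit F"
  by (simp add: delta_char_def counit_def)

lemma P_Node: "convpow (delta_char :: forest \<Rightarrow> 'k::field) n {#Node F#} = (\<Sum>m<n. convpow delta_char m F)"
proof (induction n arbitrary: F)
  case 0
  then show ?case by (simp add: counit_def)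
next
  case (Suc n)
  have "convpow (delta_char :: forest \<Rightarrow> 'k) (Suc n) {#Node F#}
     = delta_char {#Node F#} * convpow delta_char n {#} + (\<Sum>p\<in>#cutsF F. delta_char (fst p) * convpow delta_char n {#Node (snd p)#})"
    by (simp only: convpow.simps conv_split cutsF_single cutsT_Node) (simp add: multiset.map_comp comp_def split_def)
  also have "\<dots> = counit F + (\<Sum>p\<in>#cutsF F. delta_char (fst p) * (\<Sum>m<n. convpow delta_char m (snd p)))"
    by (simp add: P_empty Suc.IH delta_single_Node)
  also have "\<dots> = counit F + (\<Sum>m<n. convpow delta_char (Suc m) F)"
    by (simp only: sum_mset_sum_cmult convpow.simps conv_split)
  also have "\<dots> = (\<Sum>m<Suc n. convpow delta_char m F)"
    by (simp only: sum.lessThan_Suc_shift convpow.simps)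
  finally show ?case .
qed

lemma conv_gch_counit: "conv (delta_char :: forest \<Rightarrow> 'k::field) h F = conv gch h F + h F"
proof -
  have "conv (delta_char :: forest \<Rightarrow> 'k::field) h F = conv gch h F + conv counit h F"
    by (simp add: conv_split algebra_simps sum_mset.distrib[symmetric])
  then show ?thesis by (simp add: conv_counit)
qed

lemma conv_sum_right: "conv f (\<lambda>w. \<Sum>k\<in>K. c k * h k w) F = (\<Sum>k\<in>K. c k * conv f (h k) F)"
  by (simp add: conv_split sum_mset_sum_cmult sum_mset_distrib_left ac_simps)

lemma P_binom: "convpow (delta_char :: forest \<Rightarrow> 'k::field) n F
   = (\<Sum>k\<le>n. of_nat (n choose k) * convpow gch k F)"
proof (induction n arbitrary: F)
  case 0
  then show ?case by simp
next
  case (Suc n)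
  let ?D = "\<lambda>k. convpow (gch :: forest \<Rightarrow> 'k) k F"
  have "convpow (delta_char :: forest \<Rightarrow> 'k::field) (Suc n) F
     = (\<Sum>k\<le>n. of_nat (n choose k) * ?D (Suc k)) + (\<Sum>k\<le>n. of_nat (n choose k) * ?D k)"
    by (simp only: convpow.simps conv_gch_counit Suc.IH[abs_def] conv_sum_right) (simp add: distrib_left sum.distrib)
  also have "(\<Sum>k\<le>n. of_nat (n choose k) * ?D k) = ?D 0 + (\<Sum>k\<le>n. of_nat (n choose Suc k) * ?D (Suc k))"
  proof -
    have "(\<Sum>k\<le>Suc n. of_nat (n choose k) * ?D k) = (\<Sum>k\<le>n. of_nat (n choose k) * ?D k)"
      by (simp add: binomial_eq_0)
    then show ?thesis by (simp only: sum.atMost_Suc_shift) simp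
  qed
  also have "(\<Sum>k\<le>n. of_nat (n choose k) * ?D (Suc k)) + (?D 0 + (\<Sum>k\<le>n. of_nat (n choose Suc k) * ?D (Suc k)))
     = ?D 0 + (\<Sum>k\<le>n. of_nat (Suc n choose Suc k) * ?D (Suc k))"
    by (simp add: sum.distrib[symmetric] algebra_simps)
  also have "\<dots> = (\<Sum>k\<le>Suc n. of_nat (Suc n choose k) * ?D k)"
    by (simp only: sum.atMost_Suc_shift) simp
  finally show ?case .
qed

primrec nv :: "tree \<Rightarrow> nat" where
  "nv (Node F) = Suc (\<Sum>t\<in>#F. nv t)"

definition nvF :: "forest \<Rightarrow> nat" where
  "nvF F = (\<Sum>t\<in>#F. nv t)"

lemma nvF_add[simp]: "nvF (A + B) = nvF A + nvF B" and nvF_empty[simp]: "nvF {#} = 0"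
  and nvF_add_mset[simp]: "nvF (add_mset t A) = nv t + nvF A"
  by (simp_all add: nvF_def)

lemma nvF_pl: "nvF (fst (pl p q)) + nvF (snd (pl p q)) = (nvF (fst p) + nvF (snd p)) + (nvF (fst q) + nvF (snd q))"
  by (simp add: pl_def)

lemma size_cutsT: "x \<in># cutsT t \<Longrightarrow> nvF (fst x) + nvF (snd x) = nv t"
proof (induction t arbitrary: x)
  case (Node F)
  have forest: "\<And>x. x \<in># cutsF G \<Longrightarrow> nvF (fst x) + nvF (snd x) = nvF G"
    if "G \<subseteq># F" for G
    using that
  proof (induction G)
    case empty
    then show ?case by (simp add: cutsF_empty)
  next
    case (add t G)
    have tF: "t \<in># F" using add.prems by (meson mset_subset_eq_insertD)
    have GF: "G \<subseteq># F" by (rule subset_mset.order_trans[OF _ add.prems(2)]) simp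
    from add.prems(1) obtain p q where p: "p \<in># cutsT t" and q: "q \<in># cutsF G" and x: "x = pl p q"
      unfolding cutsF_add using in_cut_prod by blast
    show ?case using Node.IH[OF tF p] add.IH[OF q GF] x nvF_pl[of p q] by simp
  qed
  from Node.prems have "x = ({#Node F#}, {#}) \<or> (\<exists>y\<in>#cutsF F. x = (fst y, {#Node (snd y)#}))"
    unfolding cutsT_Node by (auto simp: split_def)
  then show ?case
  proof
    assume "x = ({#Node F#}, {#})" then show ?thesis by (simp add: nvF_def)
  next
    assume "\<exists>y\<in>#cutsF F. x = (fst y, {#Node (snd y)#})"
    then obtain y where y: "y \<in># cutsF F" "x = (fst y, {#Node (snd y)#})" by blast
    have "nvF (fst y) + nvF (snd y) = nvF F" using forest[of F] y(1) by simp
    then show ?thesis using y(2) by (simp add: nvF_def)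
  qed
qed

lemma size_cutsF: "x \<in># cutsF F \<Longrightarrow> nvF (fst x) + nvF (snd x) = nvF F"
proof (induction F arbitrary: x)
  case empty
  then show ?case by (simp add: cutsF_empty)
next
  case (add t G)
  from add.prems obtain p q where p: "p \<in># cutsT t" and q: "q \<in># cutsF G" and x: "x = pl p q"
    unfolding cutsF_add using in_cut_prod by blast
  show ?case using size_cutsT[OF p] add.IH[OF q] x nvF_pl[of p q] by simp
qed

lemma nvF_pos: "F \<noteq> {#} \<Longrightarrow> nvF F > 0"
proof -
  assume "F \<noteq> {#}"
  then obtain t G where "F = add_mset t G" by (meson multiset_cases)
  moreover have "nv t > 0" by (cases t) auto
  ultimately show ?thesis by simp
qed

lemma sum_mset_zero: "(\<And>x. x \<in># M \<Longrightarrow> f x = 0) \<Longrightarrow> (\<Sum>x\<in>#M. f x) = (0::'a::comm_monoid_add)"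
  by (induction M) auto

lemma D_vanish: "nvF F < k \<Longrightarrow> convpow (gch :: forest \<Rightarrow> 'k::field) k F = 0"
proof (induction k arbitrary: F)
  case 0
  then show ?case by simp
next
  case (Suc k)
  have "(gch :: forest \<Rightarrow> 'k) (fst x) * convpow gch k (snd x) = 0" if x: "x \<in># cutsF F" for x
  proof (cases "fst x = {#}")
    case True
    then show ?thesis by (simp add: delta_char_def counit_def)
  next
    case False
    then have "nvF (snd x) < k" using size_cutsF[OF x] nvF_pos[OF False] Suc.prems by simp
    then show ?thesis using Suc.IH by simp
  qed
  then show ?case unfolding convpow.simps conv_split by (rule sum_mset_zero) auto
qed

lemma D0: "convpow (gch :: forest \<Rightarrow> 'k::field) 0 F = counit F" by simp


lemma P_bowtie:
  "convpow (delta_char :: forest \<Rightarrow> 'k::field) n {#graft a b#} + convpow delta_char n {#graft b a#}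
   + convpow delta_char n {#merge a b#} = convpow delta_char n {#a#} * convpow delta_char n {#b#}"
proof -
  obtain A where a: "a = Node A" by (cases a)
  obtain B where b: "b = Node B" by (cases b)
  let ?P = "\<lambda>m F. convpow (delta_char :: forest \<Rightarrow> 'k) m F"
  have ua: "?P m (add_mset b A) = ?P m {#b#} * ?P m A" for m using P_union[of m "{#b#}" A] by simp
  have ub: "?P m (add_mset a B) = ?P m {#a#} * ?P m B" for m using P_union[of m "{#a#}" B] by simp
  have ga: "?P n {#graft a b#} = (\<Sum>m<n. ?P m {#b#} * ?P m A)" for n
    by (simp add: a P_Node ua)
  have gb: "?P n {#graft b a#} = (\<Sum>m<n. ?P m {#a#} * ?P m B)" for n
    by (simp add: b P_Node ub)
  have mg: "?P n {#merge a b#} = (\<Sum>m<n. ?P m A * ?P m B)" for n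
    by (simp add: a b P_Node P_union)
  have pa: "?P (Suc n) {#a#} = ?P n {#a#} + ?P n A" for n by (simp only: a P_Node sum.lessThan_Suc)
  have pb: "?P (Suc n) {#b#} = ?P n {#b#} + ?P n B" for n by (simp only: b P_Node sum.lessThan_Suc)
  show ?thesis
  proof (induction n)
    case 0
    then show ?case by (simp add: a b counit_def)
  next
    case (Suc n)
    have "?P (Suc n) {#graft a b#} + ?P (Suc n) {#graft b a#} + ?P (Suc n) {#merge a b#}
      = (?P n {#graft a b#} + ?P n {#graft b a#} + ?P n {#merge a b#})
        + (?P n {#b#} * ?P n A + ?P n {#a#} * ?P n B + ?P n A * ?P n B)"
      by (simp only: ga gb mg sum.lessThan_Suc) (simp add: algebra_simps)
    also have "\<dots> = ?P (Suc n) {#a#} * ?P (Suc n) {#b#}"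
      by (simp only: Suc pa pb) (simp add: algebra_simps)
    finally show ?case .
  qed
qed

fun Qp :: "nat \<Rightarrow> 'k::field_char_0 poly" where
  "Qp 0 = 1"
| "Qp (Suc k) = Qp k * [:- of_nat k, 1:]"

definition Bp :: "nat \<Rightarrow> 'k::field_char_0 poly" where
  "Bp k = smult (1 / fact k) (Qp k)"

lemma mult_lin: "(p :: 'k::field_char_0 poly) * [:c, 1:] = smult c p + pCons 0 p"
  by (simp add: mult_pCons_right)

lemma poly_Qp: "poly (Qp k) x = (\<Prod>i=0..<k. x - of_nat i)"
  by (induction k) (auto simp: prod.atLeast0_lessThan_Suc algebra_simps)

lemma poly_Bp: "poly (Bp k) (of_nat n) = (of_nat (n choose k) :: 'k::field_char_0)"
proof -
  have "poly (Bp k) (of_nat n) = ((of_nat n :: 'k) gchoose k)"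
    by (simp add: Bp_def poly_Qp gbinomial_prod_rev field_simps)
  then show ?thesis by (simp add: binomial_gbinomial)
qed

lemma coeff0_Qp: "coeff (Qp k :: 'k::field_char_0 poly) 0 = (if k = 0 then 1 else 0)"
  by (induction k) (auto simp: mult_lin)

lemma coeff1_Qp: "coeff (Qp (Suc k) :: 'k::field_char_0 poly) 1 = (-1)^k * fact k"
proof (induction k)
  case 0
  then show ?case by (simp add: mult_lin)
next
  case (Suc k)
  have "coeff (Qp (Suc (Suc k)) :: 'k poly) 1 = - of_nat (Suc k) * coeff (Qp (Suc k)) 1 + coeff (Qp (Suc k)) 0"
    by (simp only: Qp.simps(2)[of "Suc k"] mult_lin) (simp add: coeff_pCons)
  also have "\<dots> = (-1)^(Suc k) * fact (Suc k)"
    by (simp only: Suc coeff0_Qp) (simp add: algebra_simps)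
  finally show ?case .
qed

lemma coeff1_Qp': "coeff (Qp (Suc k) :: 'k::field_char_0 poly) (Suc 0) = (-1)^k * fact k"
  using coeff1_Qp[of k] by simp

lemma coeff1_Bp: "coeff (Bp k :: 'k::field_char_0 poly) 1 = (if k = 0 then 0 else (-1)^(k+1) / of_nat k)"
proof (cases k)
  case 0
  then show ?thesis by (simp add: Bp_def)
next
  case (Suc j)
  have "coeff (Bp k :: 'k poly) 1 = (-1)^j * fact j / fact (Suc j)"
    by (simp add: Bp_def Suc coeff1_Qp' del: Qp.simps)
  also have "\<dots> = (-1)^j * fact j / (of_nat (Suc j) * fact j)"
    by (simp only: fact_Suc of_nat_mult)
  also have "\<dots> = (-1)^j / of_nat (Suc j)"
    by (rule mult_divide_mult_cancel_right) simp
  also have "\<dots> = (-1)^(k+1) / of_nat k"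
    by (simp add: Suc)
  finally show ?thesis using Suc by simp
qed

lemma coeff1_Bp': "coeff (Bp k :: 'k::field_char_0 poly) (Suc 0) = (if k = 0 then 0 else (-1)^(k+1) / of_nat k)"
  using coeff1_Bp[of k] by simp

lemma coeff0_Bp: "coeff (Bp k :: 'k::field_char_0 poly) 0 = (if k = 0 then 1 else 0)"
  by (simp add: Bp_def coeff0_Qp)

definition Pol :: "nat \<Rightarrow> forest \<Rightarrow> 'k::field_char_0 poly" where
  "Pol N F = (\<Sum>k\<le>N. smult (convpow gch k F) (Bp k))"

lemma poly_Pol: assumes "nvF F \<le> N"
  shows "poly (Pol N F) (of_nat n) = (convpow (delta_char :: forest \<Rightarrow> 'k::field_char_0) n F)"
proof -
  let ?f = "\<lambda>k. of_nat (n choose k) * (convpow gch k F :: 'k)"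
  have "poly (Pol N F) (of_nat n) = (\<Sum>k\<le>N. ?f k)"
    by (simp add: Pol_def poly_sum poly_Bp mult.commute)
  also have "\<dots> = (\<Sum>k\<le>N + n. ?f k)"
    by (rule sum.mono_neutral_left) (use assms in \<open>auto intro!: D_vanish\<close>)
  also have "\<dots> = (\<Sum>k\<le>n. ?f k)"
    by (rule sum.mono_neutral_right) (auto simp: binomial_eq_0)
  also have "\<dots> = convpow delta_char n F" by (simp add: P_binom)
  finally show ?thesis .
qed

lemma coeff0_Pol: "coeff (Pol N F :: 'k::field_char_0 poly) 0 = counit F"
proof -
  have e: "(\<Sum>k\<le>N. (convpow gch k F :: 'k) * (if k = 0 then 1 else 0)) = (\<Sum>k\<le>N. if k = 0 then convpow gch k F else 0)"
    by (rule sum.cong) auto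
  show ?thesis by (simp add: Pol_def coeff_sum coeff0_Bp e)
qed

lemma omega_Pol: assumes "nvF F \<le> N"
  shows "omega F = coeff (Pol N F :: 'k::field_char_0 poly) 1"
proof -
  let ?f = "\<lambda>n. (-1) ^ (n + 1) / of_nat n * (convpow gch n F :: 'k)"
  have "omega F = (\<Sum>n\<in>{1..N}. ?f n)"
    unfolding omega_def
    by (rule sum.mono_neutral_left) (use assms in \<open>auto, metis D_vanish le_less_trans not_le\<close>)
  also have "\<dots> = (\<Sum>n\<le>N. convpow gch n F * coeff (Bp n) 1)"
    by (rule sum.mono_neutral_cong_left) (auto simp: coeff1_Bp' algebra_simps)
  also have "\<dots> = coeff (Pol N F) 1"
    by (simp add: Pol_def coeff_sum)
  finally show ?thesis .
qed

lemma poly_eq_of_nat: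
  fixes p q :: "'k::field_char_0 poly"
  assumes "\<And>n. poly p (of_nat n) = poly q (of_nat n)"
  shows "p = q"
proof (rule ccontr)
  assume "p \<noteq> q"
  then have "p - q \<noteq> 0" by simp
  then have "finite {x. poly (p - q) x = 0}" by (rule poly_roots_finite)
  moreover have "range (of_nat :: nat \<Rightarrow> 'k) \<subseteq> {x. poly (p - q) x = 0}"
    using assms by auto
  moreover have "infinite (range (of_nat :: nat \<Rightarrow> 'k))"
    by (rule range_inj_infinite) (simp add: inj_on_def)
  ultimately show False using finite_subset by blast
qed

theorem mainTheorem18:
  fixes a b :: tree
  shows "lin_eval (omega :: forest \<Rightarrow> 'k::field_char_0) (bowtie a b) = 0"
proof -
  obtain A where a: "a = Node A" by (cases a)
  obtain B where b: "b = Node B" by (cases b)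
  define N where "N = nv a + nv b"
  have n1: "nvF {#graft a b#} \<le> N" and n2: "nvF {#graft b a#} \<le> N" and n3: "nvF {#merge a b#} \<le> N"
    and n4: "nvF {#a#} \<le> N" and n5: "nvF {#b#} \<le> N"
    by (simp_all add: N_def a b)
  let ?X = "Pol N {#graft a b#} + Pol N {#graft b a#} + Pol N {#merge a b#} :: 'k poly"
  let ?Y = "Pol N {#a#} * Pol N {#b#} :: 'k poly"
  have "?X = ?Y"
    by (rule poly_eq_of_nat) (simp add: poly_Pol[OF n1] poly_Pol[OF n2] poly_Pol[OF n3]
        poly_Pol[OF n4] poly_Pol[OF n5] P_bowtie)
  then have "coeff ?X 1 = coeff ?Y 1" by simp
  moreover have "coeff ?Y 1 = 0"
    by (simp add: coeff_mult atMost_Suc coeff0_Pol counit_def)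
  moreover have "lin_eval (omega :: forest \<Rightarrow> 'k) (bowtie a b) = coeff ?X 1"
    by (simp add: lin_eval_def bowtie_def omega_Pol[OF n1] omega_Pol[OF n2] omega_Pol[OF n3])
  ultimately show ?thesis by simp
qed

end
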